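(* For every closed loop $c(\widehat{\mathbf{v}})$ moving with the velocity $\widehat{\mathbf{v}}$ of the WCIFS system below, the Kelvin circulation relation holds: $$\frac{d}{dt}\oint_{c(\widehat{\mathbf{v}})}\Big(\widehat{\mathbf{v}}\cdot d\mathbf{x}+\frac{\widetilde{\mu}}{D\rho}\,d\zeta\Big)=\oint_{c(\widehat{\mathbf{v}})}d\varpi-\frac1\rho\,dp.$$
   Context: On a free surface $z=\zeta(\mathbf{x},t)$ over horizontal coordinates $\mathbf{x}=(x,y)$, the wave-current interaction on a free surface (WCIFS) equations, derived from Hamilton's principle, govern the horizontal velocity $\widehat{\mathbf{v}}$, areal density $D$ (constrained to $D=1$ by the non-hydrostatic pressure $p$, so $\mathrm{div}\,\widehat{\mathbf{v}}=0$), buoyancy $\rho$, elevation $\zeta$ and vertical velocity $\widehat{w}$, with gravity $g$ and constant $\epsilon$: $(\partial_t+\mathcal{L}_{\widehat{\mathbf{v}}})(\widehat{\mathbf{v}}\cdot d\mathbf{x}+\widetilde{w}\,d\zeta)=d\varpi-\frac1\rho dp$; $\partial_tD+\mathrm{div}(D\widehat{\mathbf{v}})=0$; $\partial_t\rho+\widehat{\mathbf{v}}\cdot\nabla\rho=0$; $\partial_t\zeta+\widehat{\mathbf{v}}\cdot\nabla\zeta=\widehat{w}(1+\epsilon|\nabla\zeta|^2)$; $\partial_t\widetilde{w}+\widehat{\mathbf{v}}\cdot\nabla\widetilde{w}=-g+\frac{2\epsilon}{D\rho}\mathrm{div}(\widehat{w}\,\widetilde{\mu}\,\nabla\zeta)$,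 where $\varpi=\tfrac12(|\widehat{\mathbf{v}}|^2+\widehat{w}^2)-g\zeta$ and $\widetilde{\mu}=D\rho\widehat{w}/(1+\epsilon|\nabla\zeta|^2)=D\rho\widetilde{w}$. $\mathcal{L}_{\widehat{\mathbf{v}}}$ is the Lie derivative along $\widehat{\mathbf{v}}$. *)

theory Defs
  imports "HOL-Analysis.Analysis"
begin

type_synonym field = "real \<Rightarrow> real^2 \<Rightarrow> real"

definition C1 :: "('a::real_normed_vector \<Rightarrow> 'b::real_normed_vector) \<Rightarrow> bool" where
  "C1 f \<longleftrightarrow> (\<exists>f'. (\<forall>z. (f has_derivative blinfun_apply (f' z)) (at z)) \<and> continuous_on UNIV f')"

definition C1_field :: "field \<Rightarrow> bool" where
  "C1_field F \<longleftrightarrow> C1 (\<lambda>z::real \<times> (real^2). F (fst z) (snd z))"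

definition pdt :: "field \<Rightarrow> field" where
  "pdt F t x = deriv (\<lambda>s. F s x) t"

definition pdx :: "2 \<Rightarrow> field \<Rightarrow> field" where
  "pdx i F t x = deriv (\<lambda>h. F t (x + h *\<^sub>R axis i 1)) 0"

definition vcomp :: "(real \<Rightarrow> real^2 \<Rightarrow> real^2) \<Rightarrow> 2 \<Rightarrow> field" where
  "vcomp v i t x = v t x $ i"

definition gradsq :: "field \<Rightarrow> field" where
  "gradsq F t x = (\<Sum>j\<in>UNIV. (pdx j F t x)^2)"

definition matd :: "(real \<Rightarrow> real^2 \<Rightarrow> real^2) \<Rightarrow> field \<Rightarrow> field" where
  "matd v F t x = pdt F t x + (\<Sum>j\<in>UNIV. v t x $ j * pdx j F t x)"

text \<open>Components of a one-form a = sum_i a_i dx^i; the i-th component of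
  (partial_t + L_v) a is partial_t a_i + v^j partial_j a_i + a_j partial_i v^j.\<close>
definition lie_form :: "(real \<Rightarrow> real^2 \<Rightarrow> real^2) \<Rightarrow> (2 \<Rightarrow> field) \<Rightarrow> 2 \<Rightarrow> field" where
  "lie_form v a i t x = matd v (a i) t x + (\<Sum>j\<in>UNIV. a j t x * pdx i (vcomp v j) t x)"

definition loop_tangent :: "(real \<Rightarrow> real \<Rightarrow> real^2) \<Rightarrow> real \<Rightarrow> real \<Rightarrow> real^2" where
  "loop_tangent c t s = vector_derivative (\<lambda>\<sigma>. c t \<sigma>) (at s)"

definition loop_integral :: "(real \<Rightarrow> real \<Rightarrow> real^2) \<Rightarrow> real \<Rightarrow> (2 \<Rightarrow> field) \<Rightarrow> real" where
  "loop_integral c t a = integral {0..1} (\<lambda>s. \<Sum>i\<in>UNIV. a i t (c t s) * loop_tangent c t s $ i)"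

end

theory Submission
  imports Defs
begin


lemma C1_cont_apply:
  fixes F' :: "'a::real_normed_vector \<Rightarrow> 'b::real_normed_vector \<Rightarrow>\<^sub>L 'c::real_normed_vector"
  assumes "continuous_on UNIV F'"
  shows "continuous_on UNIV (\<lambda>z. blinfun_apply (F' z) h)"
  using assms by (intro continuous_intros) auto

lemma chain_blin:
  fixes F :: field and F' :: "real \<times> (real^2) \<Rightarrow> (real \<times> (real^2)) \<Rightarrow>\<^sub>L real"
  assumes dF: "\<And>z. ((\<lambda>z. F (fst z) (snd z)) has_derivative blinfun_apply (F' z)) (at z)"
    and da: "(\<alpha> has_real_derivative a') (at \<sigma>)"
    and dy: "(y has_vector_derivative y') (at \<sigma>)"
  shows "((\<lambda>\<sigma>. F (\<alpha> \<sigma>) (y \<sigma>)) has_real_derivative blinfun_apply (F' (\<alpha> \<sigma>, y \<sigma>)) (a', y')) (at \<sigma>)"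
proof -
  have p: "((\<lambda>\<sigma>. (\<alpha> \<sigma>, y \<sigma>)) has_derivative (\<lambda>h. (a' * h, h *\<^sub>R y'))) (at \<sigma>)"
    using da dy unfolding has_field_derivative_def has_vector_derivative_def
    by (intro has_derivative_Pair) auto
  have "((\<lambda>\<sigma>. F (\<alpha> \<sigma>) (y \<sigma>)) has_derivative (\<lambda>h. blinfun_apply (F' (\<alpha> \<sigma>, y \<sigma>)) (a' * h, h *\<^sub>R y'))) (at \<sigma>)"
    using has_derivative_compose[OF p dF[of "(\<alpha> \<sigma>, y \<sigma>)"]] by simp
  moreover have "(\<lambda>h. blinfun_apply (F' (\<alpha> \<sigma>, y \<sigma>)) (a' * h, h *\<^sub>R y')) = (\<lambda>h. blinfun_apply (F' (\<alpha> \<sigma>, y \<sigma>)) (a', y') * h)"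
  proof
    fix h
    have "(a' * h, h *\<^sub>R y') = h *\<^sub>R (a', y')" by (simp add: mult.commute)
    then have "blinfun_apply (F' (\<alpha> \<sigma>, y \<sigma>)) (a' * h, h *\<^sub>R y') = blinfun_apply (F' (\<alpha> \<sigma>, y \<sigma>)) (h *\<^sub>R (a', y'))"
      by (rule arg_cong)
    then show "blinfun_apply (F' (\<alpha> \<sigma>, y \<sigma>)) (a' * h, h *\<^sub>R y') = blinfun_apply (F' (\<alpha> \<sigma>, y \<sigma>)) (a', y') * h"
      by (simp only: blinfun.scaleR_right) simp
  qed
  ultimately show ?thesis unfolding has_field_derivative_def by metis
qed

lemma blin_decomp:
  fixes L :: "(real \<times> (real^2)) \<Rightarrow>\<^sub>L real"
  shows "blinfun_apply L (a, y) = a * blinfun_apply L (1, 0) + (\<Sum>j\<in>UNIV. y $ j * blinfun_apply L (0, axis j 1))"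
proof -
  have "(a, y) = a *\<^sub>R (1, 0) + (y $ 1) *\<^sub>R (0, axis 1 1) + (y $ 2) *\<^sub>R (0, axis 2 1)"
    by (auto simp: vec_eq_iff axis_def forall_2)
  then have "blinfun_apply L (a, y) = blinfun_apply L (a *\<^sub>R (1, 0) + (y $ 1) *\<^sub>R (0, axis 1 1) + (y $ 2) *\<^sub>R (0, axis 2 1))"
    by (rule arg_cong)
  also have "\<dots> = a * blinfun_apply L (1, 0) + (\<Sum>j\<in>UNIV. y $ j * blinfun_apply L (0, axis j 1))"
    by (simp only: sum_2 blinfun.add_right blinfun.scaleR_right) simp
  finally show ?thesis .
qed

definition good_field :: "field \<Rightarrow> bool" where
  "good_field F \<longleftrightarrow>
    (\<forall>\<alpha> a' (y::real \<Rightarrow> real^2) y' \<sigma>. (\<alpha> has_real_derivative a') (at \<sigma>) \<longrightarrow> (y has_vector_derivative y') (at \<sigma>) \<longrightarrow>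
      ((\<lambda>\<sigma>. F (\<alpha> \<sigma>) (y \<sigma>)) has_real_derivative
        (a' * pdt F (\<alpha> \<sigma>) (y \<sigma>) + (\<Sum>j\<in>UNIV. y' $ j * pdx j F (\<alpha> \<sigma>) (y \<sigma>)))) (at \<sigma>))
    \<and> continuous_on UNIV (\<lambda>z. F (fst z) (snd z))
    \<and> continuous_on UNIV (\<lambda>z. pdt F (fst z) (snd z))
    \<and> (\<forall>j. continuous_on UNIV (\<lambda>z. pdx j F (fst z) (snd z)))"

lemma C1_good:
  assumes "C1_field F"
  shows "good_field F"
proof -
  obtain F' where dF: "\<And>z. ((\<lambda>z. F (fst z) (snd z)) has_derivative blinfun_apply (F' z)) (at z)"
    and cF': "continuous_on UNIV F'"
    using assms unfolding C1_field_def C1_def by blast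
  have pt: "pdt F t x = blinfun_apply (F' (t, x)) (1, 0)" for t x
  proof -
    have "((\<lambda>\<sigma>. F (id \<sigma>) ((\<lambda>_. x) \<sigma>)) has_real_derivative blinfun_apply (F' (id t, (\<lambda>_. x) t)) (1, 0)) (at t)"
      by (rule chain_blin[OF dF]) (auto intro: derivative_eq_intros)
    then show ?thesis unfolding pdt_def by (simp add: DERIV_imp_deriv)
  qed
  have px: "pdx j F t x = blinfun_apply (F' (t, x)) (0, axis j 1)" for j t x
  proof -
    have "((\<lambda>\<sigma>. F ((\<lambda>_. t) \<sigma>) ((\<lambda>h. x + h *\<^sub>R axis j 1) \<sigma>)) has_real_derivative
       blinfun_apply (F' ((\<lambda>_. t) 0, (\<lambda>h. x + h *\<^sub>R axis j 1) 0)) (0, axis j 1)) (at 0)"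
      by (rule chain_blin[OF dF]) (auto intro!: derivative_eq_intros)
    then show ?thesis unfolding pdx_def by (simp add: DERIV_imp_deriv)
  qed
  have ch: "((\<lambda>\<sigma>. F (\<alpha> \<sigma>) (y \<sigma>)) has_real_derivative
        (a' * pdt F (\<alpha> \<sigma>) (y \<sigma>) + (\<Sum>j\<in>UNIV. y' $ j * pdx j F (\<alpha> \<sigma>) (y \<sigma>)))) (at \<sigma>)"
    if "(\<alpha> has_real_derivative a') (at \<sigma>)" "(y has_vector_derivative y') (at \<sigma>)" for \<alpha> a' y y' \<sigma>
    using chain_blin[OF dF that] by (simp add: pt px blin_decomp[of _ a' y'])
  have c0: "continuous_on UNIV (\<lambda>z. F (fst z) (snd z))"
    using dF by (meson continuous_at_imp_continuous_on has_derivative_continuous)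
  have c1: "continuous_on UNIV (\<lambda>z. pdt F (fst z) (snd z))"
    using C1_cont_apply[OF cF', of "(1,0)"] by (simp add: pt)
  have c2: "continuous_on UNIV (\<lambda>z. pdx j F (fst z) (snd z))" for j
    using C1_cont_apply[OF cF', of "(0, axis j 1)"] by (simp add: px)
  show ?thesis unfolding good_field_def using ch c0 c1 c2 by blast
qed

lemma axis_sum: fixes j :: "'n::finite" shows "(\<Sum>k\<in>UNIV. axis j (1::real) $ k * (f k::real)) = f j"
proof -
  have "\<And>k. axis j (1::real) $ k * f k = (if k = j then f k else 0)" by (simp add: axis_def)
  then show ?thesis by simp
qed

lemma good_chain:
  "good_field F \<Longrightarrow> (\<alpha> has_real_derivative a') (at \<sigma>) \<Longrightarrow> (y has_vector_derivative y') (at \<sigma>) \<Longrightarrow>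
      ((\<lambda>\<sigma>. F (\<alpha> \<sigma>) (y \<sigma>)) has_real_derivative
        (a' * pdt F (\<alpha> \<sigma>) (y \<sigma>) + (\<Sum>j\<in>UNIV. y' $ j * pdx j F (\<alpha> \<sigma>) (y \<sigma>)))) (at \<sigma>)"
  unfolding good_field_def by blast

lemma good_cont:
  "good_field F \<Longrightarrow> continuous_on UNIV (\<lambda>z. F (fst z) (snd z))"
  "good_field F \<Longrightarrow> continuous_on UNIV (\<lambda>z. pdt F (fst z) (snd z))"
  "good_field F \<Longrightarrow> continuous_on UNIV (\<lambda>z. pdx j F (fst z) (snd z))"
  unfolding good_field_def by blast+

lemma good_dt:
  assumes "good_field F"
  shows "((\<lambda>\<sigma>. F \<sigma> x) has_real_derivative pdt F t x) (at t)"
  using good_chain[OF assms, where \<alpha>="\<lambda>\<sigma>. \<sigma>" and a'=1 and \<sigma>=t and y="\<lambda>_. x" and y'=0] by (simp add: has_vector_derivative_const)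

lemma good_dx:
  assumes "good_field F"
  shows "((\<lambda>h. F t (x + h *\<^sub>R axis j 1)) has_real_derivative pdx j F t x) (at 0)"
proof -
  have "((\<lambda>h. x + h *\<^sub>R axis j 1) has_vector_derivative axis j 1) (at 0)"
    by (auto intro!: derivative_eq_intros)
  from good_chain[OF assms DERIV_const[of t] this] show ?thesis
    by (simp add: axis_sum)
qed

lemma good_add:
  assumes F: "good_field F" and G: "good_field G"
  shows "good_field (\<lambda>t x. F t x + G t x)"
proof -
  have pt: "pdt (\<lambda>t x. F t x + G t x) t x = pdt F t x + pdt G t x" for t x
    unfolding pdt_def[of "\<lambda>t x. F t x + G t x"]
    by (rule DERIV_imp_deriv, rule derivative_intros, rule good_dt[OF F], rule good_dt[OF G])
  have px: "pdx j (\<lambda>t x. F t x + G t x) t x = pdx j F t x + pdx j G t x" for j t x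
    unfolding pdx_def[of j "\<lambda>t x. F t x + G t x"]
    by (rule DERIV_imp_deriv, rule derivative_intros, rule good_dx[OF F], rule good_dx[OF G])
  show ?thesis unfolding good_field_def
  proof (intro conjI allI impI)
    fix \<alpha> a' and y :: "real \<Rightarrow> real^2" and y' \<sigma>
    assume a: "(\<alpha> has_real_derivative a') (at \<sigma>)" and y: "(y has_vector_derivative y') (at \<sigma>)"
    show "((\<lambda>\<sigma>. F (\<alpha> \<sigma>) (y \<sigma>) + G (\<alpha> \<sigma>) (y \<sigma>)) has_real_derivative
        (a' * pdt (\<lambda>t x. F t x + G t x) (\<alpha> \<sigma>) (y \<sigma>) + (\<Sum>j\<in>UNIV. y' $ j * pdx j (\<lambda>t x. F t x + G t x) (\<alpha> \<sigma>) (y \<sigma>)))) (at \<sigma>)"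
      using DERIV_add[OF good_chain[OF F a y] good_chain[OF G a y]]
      by (simp add: pt px sum_2 algebra_simps)
  next
    show "continuous_on UNIV (\<lambda>z. F (fst z) (snd z) + G (fst z) (snd z))"
      using good_cont[OF F] good_cont[OF G] by (intro continuous_intros)
    show "continuous_on UNIV (\<lambda>z. pdt (\<lambda>t x. F t x + G t x) (fst z) (snd z))"
      using good_cont[OF F] good_cont[OF G] by (simp add: pt continuous_intros)
    fix j
    show "continuous_on UNIV (\<lambda>z. pdx j (\<lambda>t x. F t x + G t x) (fst z) (snd z))"
      using good_cont[OF F] good_cont[OF G] by (simp add: px continuous_intros)
  qed
qed

lemma good_mult:
  assumes F: "good_field F" and G: "good_field G"
  shows "good_field (\<lambda>t x. F t x * G t x)"
proof -
  have pt: "pdt (\<lambda>t x. F t x * G t x) t x = pdt F t x * G t x + F t x * pdt G t x" for t x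
    unfolding pdt_def[of "\<lambda>t x. F t x * G t x"]
    using DERIV_imp_deriv[OF DERIV_mult[OF good_dt[OF F] good_dt[OF G]]] by (simp add: algebra_simps)
  have px: "pdx j (\<lambda>t x. F t x * G t x) t x = pdx j F t x * G t x + F t x * pdx j G t x" for j t x
    unfolding pdx_def[of j "\<lambda>t x. F t x * G t x"]
    using DERIV_imp_deriv[OF DERIV_mult[OF good_dx[OF F] good_dx[OF G]]] by (simp add: algebra_simps)
  show ?thesis unfolding good_field_def
  proof (intro conjI allI impI)
    fix \<alpha> a' and y :: "real \<Rightarrow> real^2" and y' \<sigma>
    assume a: "(\<alpha> has_real_derivative a') (at \<sigma>)" and y: "(y has_vector_derivative y') (at \<sigma>)"
    show "((\<lambda>\<sigma>. F (\<alpha> \<sigma>) (y \<sigma>) * G (\<alpha> \<sigma>) (y \<sigma>)) has_real_derivative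
        (a' * pdt (\<lambda>t x. F t x * G t x) (\<alpha> \<sigma>) (y \<sigma>) + (\<Sum>j\<in>UNIV. y' $ j * pdx j (\<lambda>t x. F t x * G t x) (\<alpha> \<sigma>) (y \<sigma>)))) (at \<sigma>)"
      using DERIV_mult[OF good_chain[OF F a y] good_chain[OF G a y]]
      by (simp add: pt px sum_2 algebra_simps)
  next
    show "continuous_on UNIV (\<lambda>z. F (fst z) (snd z) * G (fst z) (snd z))"
      using good_cont[OF F] good_cont[OF G] by (intro continuous_intros)
    show "continuous_on UNIV (\<lambda>z. pdt (\<lambda>t x. F t x * G t x) (fst z) (snd z))"
      using good_cont[OF F] good_cont[OF G] by (simp add: pt continuous_intros)
    fix j
    show "continuous_on UNIV (\<lambda>z. pdx j (\<lambda>t x. F t x * G t x) (fst z) (snd z))"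
      using good_cont[OF F] good_cont[OF G] by (simp add: px continuous_intros)
  qed
qed


lemma mixed_partial:
  fixes f u w q :: "real \<Rightarrow> real \<Rightarrow> real"
  assumes ft: "\<And>t s. ((\<lambda>t. f t s) has_real_derivative u t s) (at t)"
    and fs: "\<And>t s. ((\<lambda>s. f t s) has_real_derivative w t s) (at s)"
    and us: "\<And>t s. ((\<lambda>s. u t s) has_real_derivative q t s) (at s)"
    and uc: "\<And>s. continuous_on UNIV (\<lambda>t. u t s)"
    and qc: "continuous_on UNIV (\<lambda>z. q (fst z) (snd z))"
  shows "((\<lambda>t. w t s) has_real_derivative q t s) (at t)"
proof -
  define b where "b = t - 1"
  have I: "f \<tau> s' - f b s' = integral {b..\<tau>} (\<lambda>r. u r s')" if "b \<le> \<tau>" for \<tau> s'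
  proof -
    have "((\<lambda>r. u r s') has_integral (f \<tau> s' - f b s')) {b..\<tau>}"
    proof (rule fundamental_theorem_of_calculus[OF that])
      fix x assume "x \<in> {b..\<tau>}"
      show "((\<lambda>r. f r s') has_vector_derivative u x s') (at x within {b..\<tau>})"
        unfolding has_real_derivative_iff_has_vector_derivative[symmetric]
        by (rule has_field_derivative_at_within[OF ft])
    qed
    then show ?thesis by (simp add: integral_unique)
  qed
  have qc2: "continuous_on (UNIV \<times> cbox b \<tau>) (\<lambda>(x, r). q r x)" for \<tau>
  proof -
    have "continuous_on UNIV (\<lambda>z::real\<times>real. q (snd z) (fst z))"
      by (rule continuous_on_compose2[OF qc, of _ "\<lambda>z. (snd z, fst z)", simplified])
        (auto intro!: continuous_intros)
    then show ?thesis by (auto simp: case_prod_beta intro: continuous_on_subset)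
  qed
  have L: "((\<lambda>s'. integral {b..\<tau>} (\<lambda>r. u r s')) has_real_derivative integral {b..\<tau>} (\<lambda>r. q r s')) (at s')" for \<tau> s'
  proof -
    have "((\<lambda>x. integral (cbox b \<tau>) ((\<lambda>x r. u r x) x)) has_field_derivative integral (cbox b \<tau>) ((\<lambda>x r. q r x) s')) (at s' within UNIV)"
    proof (rule leibniz_rule_field_derivative[where U=UNIV])
      show "((\<lambda>x. u r x) has_field_derivative q r x) (at x within UNIV)" for x r
        using us[of r x] by simp
      show "(\<lambda>r. u r x) integrable_on cbox b \<tau>" for x
        by (rule integrable_continuous) (rule continuous_on_subset[OF uc], simp)
      show "continuous_on (UNIV \<times> cbox b \<tau>) (\<lambda>(x, t). q t x)" by (rule qc2)
    qed auto
    then show ?thesis by simp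
  qed
  have W: "w \<tau> s = w b s + integral {b..\<tau>} (\<lambda>r. q r s)" if "b \<le> \<tau>" for \<tau>
  proof -
    have "((\<lambda>s'. f \<tau> s' - f b s') has_real_derivative w \<tau> s - w b s) (at s)"
      by (intro derivative_intros fs)
    moreover have "((\<lambda>s'. f \<tau> s' - f b s') has_real_derivative integral {b..\<tau>} (\<lambda>r. q r s)) (at s)"
      using L[of \<tau> s] I[OF that] by simp
    ultimately show ?thesis using DERIV_unique by fastforce
  qed
  have qcs: "continuous_on UNIV (\<lambda>r. q r s)"
    by (rule continuous_on_compose2[OF qc, of _ "\<lambda>r. (r, s)", simplified]) (auto intro!: continuous_intros)
  have "((\<lambda>\<tau>. integral {b..\<tau>} (\<lambda>r. q r s)) has_real_derivative q t s) (at t within {b..t+1})"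
    by (rule integral_has_real_derivative) (auto simp: b_def intro: continuous_on_subset[OF qcs])
  then have "((\<lambda>\<tau>. integral {b..\<tau>} (\<lambda>r. q r s)) has_real_derivative q t s) (at t)"
    by (simp add: at_within_Icc_at b_def)
  then have "((\<lambda>\<tau>. w b s + integral {b..\<tau>} (\<lambda>r. q r s)) has_real_derivative q t s) (at t)"
    by (auto intro!: derivative_eq_intros)
  then show ?thesis
  proof (rule has_field_derivative_transform_within_open[where S="{b<..}"])
    fix x assume "x \<in> {b<..}"
    then show "w b s + integral {b..x} (\<lambda>r. q r s) = w x s" using W[of x] by simp
  qed (auto simp: b_def)
qed




lemma vd_component:
  assumes "(f has_vector_derivative (f'::real^'n)) F"
  shows "((\<lambda>x. f x $ i) has_real_derivative f' $ i) F"
proof -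
  have "((\<lambda>x. f x $ i) has_derivative (\<lambda>x. (x *\<^sub>R f') $ i)) F"
    using bounded_linear.has_derivative[OF bounded_linear_vec_nth assms[unfolded has_vector_derivative_def]] .
  moreover have "(\<lambda>x. (x *\<^sub>R f') $ i) = (*) (f' $ i)" by (auto simp: mult.commute)
  ultimately show ?thesis unfolding has_field_derivative_def by simp
qed

lemma cont_comp2:
  assumes "continuous_on UNIV (\<lambda>z. G (fst z) (snd z))" "continuous_on S a" "continuous_on S b"
  shows "continuous_on S (\<lambda>z. G (a z) (b z))"
  using continuous_on_compose2[OF assms(1), of S "\<lambda>z. (a z, b z)"] assms(2,3)
  by (auto intro: continuous_on_Pair)



lemma kelvin_core:
  fixes v :: "real \<Rightarrow> real^2 \<Rightarrow> real^2" and A :: "2 \<Rightarrow> field"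
    and c :: "real \<Rightarrow> real \<Rightarrow> real^2"
  assumes gA: "\<And>i. good_field (A i)" and gv: "\<And>i. good_field (vcomp v i)"
    and loop_reg: "C1 (\<lambda>z::real \<times> real. c (fst z) (snd z))"
    and loop_moves: "\<And>t s. ((\<lambda>\<tau>. c \<tau> s) has_vector_derivative v t (c t s)) (at t)"
  shows "((\<lambda>t. loop_integral c t A) has_real_derivative loop_integral c t (\<lambda>i. lie_form v A i)) (at t)"
proof -
  obtain C' where dC: "\<And>z. ((\<lambda>z::real \<times> real. c (fst z) (snd z)) has_derivative blinfun_apply (C' z)) (at z)"
    and cC': "continuous_on UNIV C'"
    using loop_reg unfolding C1_def by blast
  define T where "T t s = blinfun_apply (C' (t, s)) (0, 1)" for t s
  have cs: "((\<lambda>s. c t s) has_vector_derivative T t s) (at s)" for t s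
  proof -
    have p: "((\<lambda>s. (t, s)) has_derivative (\<lambda>h. (0, h))) (at s)"
      by (auto intro!: derivative_eq_intros)
    have "((\<lambda>s. c t s) has_derivative (\<lambda>h. blinfun_apply (C' (t, s)) (0, h))) (at s)"
      using has_derivative_compose[OF p dC[of "(t, s)"]] by simp
    moreover have "(\<lambda>h. blinfun_apply (C' (t, s)) (0, h)) = (\<lambda>h. h *\<^sub>R T t s)"
    proof
      fix h
      have "(0::real, h) = h *\<^sub>R (0, 1)" by simp
      then have "blinfun_apply (C' (t, s)) (0, h) = blinfun_apply (C' (t, s)) (h *\<^sub>R (0, 1))"
        by (rule arg_cong)
      then show "blinfun_apply (C' (t, s)) (0, h) = h *\<^sub>R T t s"
        unfolding T_def by (simp only: blinfun.scaleR_right)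
    qed
    ultimately show ?thesis unfolding has_vector_derivative_def by simp
  qed
  have LT: "loop_tangent c t s = T t s" for t s
    unfolding loop_tangent_def using cs by (rule vector_derivative_at)
  have cT: "continuous_on UNIV (\<lambda>z. T (fst z) (snd z))"
    using C1_cont_apply[OF cC', of "(0,1)"] by (simp add: T_def)
  have cc: "continuous_on UNIV (\<lambda>z. c (fst z) (snd z))"
    using dC by (meson continuous_at_imp_continuous_on has_derivative_continuous)
  have cfst: "continuous_on S (\<lambda>z::real\<times>real. c (fst z) (snd z))" for S
    using cc by (rule continuous_on_subset) simp
  define q where "q i t s = (\<Sum>j\<in>UNIV. T t s $ j * pdx j (vcomp v i) t (c t s))" for i t s
  have dT: "((\<lambda>t. T t s $ i) has_real_derivative q i t s) (at t)" for i t s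
  proof (rule mixed_partial[where f="\<lambda>t s. c t s $ i" and u="\<lambda>t s. vcomp v i t (c t s)" and w="\<lambda>t s. T t s $ i" and q="q i"])
    show "((\<lambda>t. c t s $ i) has_real_derivative vcomp v i t (c t s)) (at t)" for t s
      using vd_component[OF loop_moves[where t=t and s=s], of i] by (simp add: vcomp_def)
    show "((\<lambda>s. c t s $ i) has_real_derivative T t s $ i) (at s)" for t s
      by (rule vd_component[OF cs])
    show "((\<lambda>s. vcomp v i t (c t s)) has_real_derivative q i t s) (at s)" for t s
      using good_chain[OF gv DERIV_const[of t] cs[of t s]] by (simp add: q_def)
    show "continuous_on UNIV (\<lambda>t. vcomp v i t (c t s))" for s
      by (rule cont_comp2[OF good_cont(1)[OF gv]])
        (auto intro!: continuous_intros cont_comp2[OF cc])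
    show "continuous_on UNIV (\<lambda>z. q i (fst z) (snd z))"
      unfolding q_def
      by (intro continuous_intros continuous_on_component cT cont_comp2[OF good_cont(3)[OF gv]] cfst)
  qed
  define h where "h t s = (\<Sum>i\<in>UNIV. A i t (c t s) * T t s $ i)" for t s
  define H where "H t s = (\<Sum>i\<in>UNIV. (pdt (A i) t (c t s) + (\<Sum>j\<in>UNIV. v t (c t s) $ j * pdx j (A i) t (c t s))) * T t s $ i
     + A i t (c t s) * q i t s)" for t s
  have dh: "((\<lambda>t. h t s) has_real_derivative H t s) (at t)" for t s
    unfolding h_def H_def
  proof (rule DERIV_sum)
    fix i :: 2
    have a: "((\<lambda>t. A i t (c t s)) has_real_derivative
       (pdt (A i) t (c t s) + (\<Sum>j\<in>UNIV. v t (c t s) $ j * pdx j (A i) t (c t s)))) (at t)"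
      using good_chain[OF gA, where \<alpha>="\<lambda>\<tau>. \<tau>" and a'=1 and \<sigma>=t and y="\<lambda>\<tau>. c \<tau> s", OF DERIV_ident loop_moves]
      by simp
    show "((\<lambda>t. A i t (c t s) * T t s $ i) has_real_derivative
      (pdt (A i) t (c t s) + (\<Sum>j\<in>UNIV. v t (c t s) $ j * pdx j (A i) t (c t s))) * T t s $ i
       + A i t (c t s) * q i t s) (at t)"
      by (rule DERIV_cong[OF DERIV_mult[OF a dT]]) (simp add: algebra_simps)
  qed
  have vc: "continuous_on UNIV (\<lambda>z. v (fst z) (c (fst z) (snd z)) $ j)" for j
    using cont_comp2[OF good_cont(1)[OF gv[of j]] continuous_on_fst[OF continuous_on_id] cfst] by (simp add: vcomp_def)
  have cH: "continuous_on UNIV (\<lambda>z. H (fst z) (snd z))"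
    unfolding H_def q_def
    by (intro continuous_intros continuous_on_component cT vc cfst
         cont_comp2[OF good_cont(1)[OF gA]] cont_comp2[OF good_cont(2)[OF gA]]
         cont_comp2[OF good_cont(3)[OF gA]] cont_comp2[OF good_cont(3)[OF gv]])
  have ch: "continuous_on UNIV (\<lambda>s. h t s)" for t
  proof -
    have "continuous_on UNIV (\<lambda>z. h (fst z) (snd z))"
      unfolding h_def
      by (intro continuous_intros continuous_on_component cT cfst cont_comp2[OF good_cont(1)[OF gA]])
    moreover have "continuous_on UNIV (\<lambda>s::real. (t, s))"
      by (intro continuous_on_Pair continuous_on_const continuous_on_id)
    ultimately show ?thesis using continuous_on_compose2[of UNIV "\<lambda>z. h (fst z) (snd z)" UNIV "\<lambda>s. (t, s)"] by simp
  qed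
  have L: "((\<lambda>t. integral (cbox 0 1) (h t)) has_field_derivative integral (cbox 0 1) (H t)) (at t within UNIV)"
  proof (rule leibniz_rule_field_derivative[where U=UNIV])
    show "((\<lambda>t. h t s) has_field_derivative H t s) (at t within UNIV)" for t s
      using dh by simp
    show "h t integrable_on cbox 0 1" for t
      by (rule integrable_continuous) (rule continuous_on_subset[OF ch], simp)
    show "continuous_on (UNIV \<times> cbox 0 1) (\<lambda>(t, s). H t s)"
      using cH by (auto simp: case_prod_beta intro: continuous_on_subset)
  qed auto
  have e1: "(\<lambda>t. loop_integral c t A) = (\<lambda>t. integral (cbox 0 1) (h t))"
  proof -
    have "h t = (\<lambda>s. \<Sum>i\<in>UNIV. A i t (c t s) * T t s $ i)" for t by (simp add: h_def fun_eq_iff)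
    then show ?thesis by (auto simp: loop_integral_def LT)
  qed
  have e2: "H t s = (\<Sum>i\<in>UNIV. lie_form v A i t (c t s) * loop_tangent c t s $ i)" for s
    unfolding H_def q_def LT lie_form_def matd_def vcomp_def
    by (simp add: sum_2 algebra_simps)
  have e3: "integral (cbox 0 1) (H t) = loop_integral c t (\<lambda>i. lie_form v A i)"
  proof -
    have "H t = (\<lambda>s. \<Sum>i\<in>UNIV. lie_form v A i t (c t s) * loop_tangent c t s $ i)" by (simp add: e2 fun_eq_iff)
    then show ?thesis by (simp add: loop_integral_def)
  qed
  show ?thesis using L unfolding e1 e3 by simp
qed

theorem mainTheorem5:
  fixes v :: "real \<Rightarrow> real^2 \<Rightarrow> real^2"
    and D \<rho> \<zeta> wh wt p \<mu> vpi :: field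
    and g \<epsilon> :: real
    and c :: "real \<Rightarrow> real \<Rightarrow> real^2"
  assumes reg_v: "\<And>j. C1_field (vcomp v j)"
    and reg_D: "C1_field D" and reg_rho: "C1_field \<rho>"
    and reg_zeta: "C1_field \<zeta>" and reg_gzeta: "\<And>i. C1_field (pdx i \<zeta>)"
    and reg_wh: "C1_field wh" and reg_wt: "C1_field wt" and reg_mu: "C1_field \<mu>"
    and reg_p: "C1_field p"
    and rho_nz: "\<And>t x. \<rho> t x \<noteq> 0"
    and D_one: "\<And>t x. D t x = 1"
    and vpi_def: "\<And>t x. vpi t x = ((\<Sum>j\<in>UNIV. (v t x $ j)^2) + (wh t x)^2) / 2 - g * \<zeta> t x"
    and mu_def: "\<And>t x. \<mu> t x = D t x * \<rho> t x * wh t x / (1 + \<epsilon> * gradsq \<zeta> t x)"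
    and mu_wt: "\<And>t x. \<mu> t x = D t x * \<rho> t x * wt t x"
    and momentum: "\<And>i t x. lie_form v (\<lambda>j t x. v t x $ j + wt t x * pdx j \<zeta> t x) i t x
                     = pdx i vpi t x - 1 / \<rho> t x * pdx i p t x"
    and continuity: "\<And>t x. pdt D t x + (\<Sum>j\<in>UNIV. pdx j (\<lambda>t x. D t x * v t x $ j) t x) = 0"
    and buoyancy: "\<And>t x. matd v \<rho> t x = 0"
    and kinematic: "\<And>t x. matd v \<zeta> t x = wh t x * (1 + \<epsilon> * gradsq \<zeta> t x)"
    and vertical: "\<And>t x. matd v wt t x = - g + 2 * \<epsilon> / (D t x * \<rho> t x) *
                     (\<Sum>j\<in>UNIV. pdx j (\<lambda>t x. wh t x * \<mu> t x * pdx j \<zeta> t x) t x)"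
    and loop_reg: "C1 (\<lambda>z::real \<times> real. c (fst z) (snd z))"
    and loop_closed: "\<And>t. c t 0 = c t 1"
    and loop_moves: "\<And>t s. ((\<lambda>\<tau>. c \<tau> s) has_vector_derivative v t (c t s)) (at t)"
  shows "\<And>t. ((\<lambda>t. loop_integral c t (\<lambda>i t x. v t x $ i + \<mu> t x / (D t x * \<rho> t x) * pdx i \<zeta> t x))
            has_real_derivative
            loop_integral c t (\<lambda>i t x. pdx i vpi t x - 1 / \<rho> t x * pdx i p t x)) (at t)"
  proof -
  fix t
  define A where "A = (\<lambda>i t x. v t x $ i + wt t x * pdx i \<zeta> t x)"
  have gA: "good_field (A i)" for i
  proof -
    have "vcomp v i = (\<lambda>t x. v t x $ i)" by (simp add: fun_eq_iff vcomp_def)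
    then have g1: "good_field (\<lambda>t x. v t x $ i)" using C1_good[OF reg_v[of i]] by simp
    have g2: "good_field (\<lambda>t x. wt t x * pdx i \<zeta> t x)"
      by (rule good_mult[OF C1_good[OF reg_wt] C1_good[OF reg_gzeta]])
    show ?thesis unfolding A_def using good_add[OF g1 g2] by simp
  qed
  have gv: "good_field (vcomp v i)" for i by (rule C1_good[OF reg_v])
  have eqA: "(\<lambda>i t x. v t x $ i + \<mu> t x / (D t x * \<rho> t x) * pdx i \<zeta> t x) = A"
    unfolding A_def using mu_wt D_one rho_nz by (simp add: fun_eq_iff)
  have eqR: "(\<lambda>i t x. pdx i vpi t x - 1 / \<rho> t x * pdx i p t x) = (\<lambda>i. lie_form v A i)"
    unfolding A_def using momentum by (simp add: fun_eq_iff)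
  show "((\<lambda>t. loop_integral c t (\<lambda>i t x. v t x $ i + \<mu> t x / (D t x * \<rho> t x) * pdx i \<zeta> t x))
            has_real_derivative
            loop_integral c t (\<lambda>i t x. pdx i vpi t x - 1 / \<rho> t x * pdx i p t x)) (at t)"
    unfolding eqA eqR by (rule kelvin_core[OF gA gv loop_reg loop_moves])
qed

end
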